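(* Let $P_{\mathrm{T}}>0$ and $\sigma^2>0$. For a beamformer $\mathbf{w}:\mathcal{S}_{\mathrm{T}}\to\mathbb{C}^{1\times N}$ define $\mathbf{e}(\mathbf{r})=\int_{\mathcal{S}_{\mathrm{T}}} h(\mathbf{r},\mathbf{s})\mathbf{w}(\mathbf{s})\,d\mathbf{s}$ and $\mathbf{Q}=\int_{\mathcal{S}_{\mathrm{R}}}\mathbf{e}^H(\mathbf{r})\mathbf{e}(\mathbf{r})\,d\mathbf{r}$. Consider the constrained problem $$\max_{\mathbf{w}(\mathbf{s})}\ \log\det\left(\mathbf{I}_N+\frac{1}{\sigma^2}\mathbf{Q}\right)\quad\text{s.t.}\quad \int_{\mathcal{S}_{\mathrm{T}}}\|\mathbf{w}(\mathbf{s})\|^2d\mathbf{s}\le P_{\mathrm{T}},$$ and the unconstrained problem $$\max_{\mathbf{w}(\mathbf{s})}\ \widetilde{R}=\log\det\left(\mathbf{I}_N+\frac{1}{\widetilde{\sigma}^2}\mathbf{Q}\right),\qquad \widetilde{\sigma}^2=\frac{\sigma^2}{P_{\mathrm{T}}}\int_{\mathcal{S}_{\mathrm{T}}}\|\mathbf{w}(\mathbf{s})\|^2d\mathbf{s}.$$ Let $\mathbf{w}^{\dagger}(\mathbf{s})$ denote an optimal solution of the unconstrained problem. Then an optimal solution of the constrained problem is $$\mathbf{w}^{\star}(\mathbf{s})=\sqrt{\frac{P_{\mathrm{T}}}{\int_{\mathcal{S}_{\mathrm{T}}}\|\mathbf{w}^{\dagger}(\mathbf{s})\|^2d\mathbf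{s}}}\,\mathbf{w}^{\dagger}(\mathbf{s}).$$
   Context: $\mathcal{S}_{\mathrm{T}},\mathcal{S}_{\mathrm{R}}\subset\mathbb{R}^3$ are bounded planar rectangular surfaces with surface (Lebesgue) integration, $h:\mathcal{S}_{\mathrm{R}}\times\mathcal{S}_{\mathrm{T}}\to\mathbb{C}$ is a bounded channel kernel, beamformers $\mathbf{w}(\mathbf{s})=[w_1(\mathbf{s}),\dots,w_N(\mathbf{s})]\in\mathbb{C}^{1\times N}$ are square-integrable on $\mathcal{S}_{\mathrm{T}}$ (nonzero in the unconstrained problem so that $\widetilde{\sigma}^2>0$), and $\|\cdot\|$ is the Euclidean norm. *)

theory Defs
  imports "HOL-Analysis.Analysis"
begin

definition rect_param :: "real^3 \<Rightarrow> real^3 \<Rightarrow> real^3 \<Rightarrow> real \<times> real \<Rightarrow> real^3" where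
  "rect_param c a b = (\<lambda>(u, v). c + u *\<^sub>R a + v *\<^sub>R b)"

definition valid_rect :: "real^3 \<Rightarrow> real^3 \<Rightarrow> real \<Rightarrow> real \<Rightarrow> bool" where
  "valid_rect a b L1 L2 \<longleftrightarrow> norm a = 1 \<and> norm b = 1 \<and> a \<bullet> b = 0 \<and> L1 > 0 \<and> L2 > 0"

definition rect_set :: "real^3 \<Rightarrow> real^3 \<Rightarrow> real^3 \<Rightarrow> real \<Rightarrow> real \<Rightarrow> (real^3) set" where
  "rect_set c a b L1 L2 = rect_param c a b ` cbox (0, 0) (L1, L2)"

text \<open>Surface (area) measure on the rectangle: push-forward of 2D Lebesgue measure on the
  parameter box under the isometric parametrisation (= 2D Hausdorff measure on the surface).\<close>

definition rect_measure :: "real^3 \<Rightarrow> real^3 \<Rightarrow> real^3 \<Rightarrow> real \<Rightarrow> real \<Rightarrow> (real^3) measure" where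
  "rect_measure c a b L1 L2 =
     distr (restrict_space lborel (cbox (0, 0) (L1, L2))) borel (rect_param c a b)"

text \<open>Beamformers w(s) in C^{1 x N}, represented as vectors complex^'n (N = CARD('n)).\<close>

definition admissible :: "(real^3) measure \<Rightarrow> (real^3 \<Rightarrow> complex^'n) \<Rightarrow> bool" where
  "admissible M w \<longleftrightarrow> w \<in> borel_measurable M \<and> integrable M (\<lambda>s. (norm (w s))\<^sup>2)"

definition energy :: "(real^3) measure \<Rightarrow> (real^3 \<Rightarrow> complex^'n) \<Rightarrow> real" where
  "energy M w = (\<integral>s. (norm (w s))\<^sup>2 \<partial>M)"

definition beam_e :: "(real^3) measure \<Rightarrow> (real^3 \<Rightarrow> real^3 \<Rightarrow> complex)
    \<Rightarrow> (real^3 \<Rightarrow> complex^'n) \<Rightarrow> real^3 \<Rightarrow> complex^'n" where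
  "beam_e MT h w r = (\<chi> i. \<integral>s. h r s * w s $ i \<partial>MT)"

definition gram_Q :: "(real^3) measure \<Rightarrow> (real^3) measure \<Rightarrow> (real^3 \<Rightarrow> real^3 \<Rightarrow> complex)
    \<Rightarrow> (real^3 \<Rightarrow> complex^'n) \<Rightarrow> complex^'n^'n" where
  "gram_Q MR MT h w = (\<chi> i j. \<integral>r. cnj (beam_e MT h w r $ i) * beam_e MT h w r $ j \<partial>MR)"

text \<open>log det (I + Q / s2); the determinant is real and positive for Hermitian PSD Q,
  so we take the natural log of its real part.\<close>
definition logdet_rate :: "real \<Rightarrow> complex^'n^'n \<Rightarrow> real" where
  "logdet_rate s2 Q = ln (Re (det (mat 1 + (1 / s2) *\<^sub>R Q)))"

end

theory Submission
  imports Defs "HOL-Computational_Algebra.Fundamental_Theorem_Algebra"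
begin


definition detpoly :: "complex^'n::finite^'n \<Rightarrow> complex poly" where
  "detpoly Q = (\<Sum>p\<in>{p. p permutes (UNIV::'n set)}. of_int (sign p) *
      (\<Prod>i\<in>UNIV. [: (mat 1 :: complex^'n^'n)$i$(p i), Q$i$(p i) :]))"

lemma poly_detpoly: "poly (detpoly Q) z = det (\<chi> i j. (mat 1 :: complex^'n::finite^'n)$i$j + z * Q$i$j)"
  unfolding detpoly_def det_def by (simp add: poly_sum poly_prod poly_of_int)

lemma detpoly_root:
  fixes Q :: "complex^'n::finite^'n"
  assumes psd: "\<forall>x. \<exists>q\<ge>0. (\<Sum>i\<in>UNIV. \<Sum>j\<in>UNIV. cnj (x$i) * Q$i$j * x$j) = of_real q"
    and r: "poly (detpoly Q) r = 0"
  shows "Im r = 0 \<and> Re r < 0"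
proof -
  define M where "M = (\<chi> i j. (mat 1 :: complex^'n::finite^'n)$i$j + r * Q$i$j)"
  have "det M = 0" using r by (simp add: poly_detpoly M_def)
  hence "\<not> inj ((*v) M)"
    using det_nz_iff_inj_gen[OF matrix_vector_mul_linear_gen[of M]]
    by (simp add: matrix_of_matrix_vector_mul)
  then obtain y z where yz: "y \<noteq> z" "M *v y = M *v z" unfolding inj_def by blast
  define x where "x = y - z"
  have x0: "x \<noteq> 0" using yz by (simp add: x_def)
  have Mx: "M *v x = 0" using yz by (simp add: x_def matrix_vector_mult_diff_distrib)
  obtain q where q: "q \<ge> 0" "(\<Sum>i\<in>UNIV. \<Sum>j\<in>UNIV. cnj (x$i) * Q$i$j * x$j) = of_real q"
    using psd by blast
  have "0 = (\<Sum>i\<in>UNIV. cnj (x$i) * (M *v x)$i)" using Mx by simp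
  also have "\<dots> = (\<Sum>i\<in>UNIV. cnj (x$i) * x$i) + r * (\<Sum>i\<in>UNIV. \<Sum>j\<in>UNIV. cnj (x$i) * Q$i$j * x$j)"
  proof -
    have "(M *v x)$i = x$i + r * (\<Sum>j\<in>UNIV. Q$i$j * x$j)" for i
    proof -
      have "(M *v x)$i = (\<Sum>j\<in>UNIV. (if i = j then x$j else 0) + r * (Q$i$j * x$j))"
        unfolding M_def matrix_vector_mult_def vec_lambda_beta by (intro sum.cong) (auto simp: mat_def algebra_simps)
      also have "\<dots> = x$i + r * (\<Sum>j\<in>UNIV. Q$i$j * x$j)"
        by (simp add: sum.distrib sum_distrib_left)
      finally show ?thesis .
    qed
    thus ?thesis
      by (simp add: algebra_simps sum_distrib_left sum.distrib)
  qed
  finally have eq: "0 = (\<Sum>i\<in>UNIV. cnj (x$i) * x$i) + r * of_real q" using q by simp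
  have nx: "(\<Sum>i\<in>UNIV. cnj (x$i) * x$i) = of_real (\<Sum>i\<in>UNIV. (cmod (x$i))\<^sup>2)"
    unfolding of_real_sum of_real_power by (intro sum.cong refl) (simp only: complex_norm_square[symmetric] mult.commute[of "cnj _"] of_real_power)
  have pos: "(\<Sum>i\<in>UNIV. (cmod (x$i))\<^sup>2) > 0"
  proof -
    obtain k where "x$k \<noteq> 0" using x0 by (metis vec_eq_iff zero_index)
    hence "(cmod (x$k))\<^sup>2 > 0" by simp
    moreover have "(cmod (x$k))\<^sup>2 \<le> (\<Sum>i\<in>UNIV. (cmod (x$i))\<^sup>2)"
      by (rule member_le_sum) auto
    ultimately show ?thesis by linarith
  qed
  define s where "s = (\<Sum>i\<in>UNIV. (cmod (x$i))\<^sup>2)"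
  have eq2: "r * of_real q = - of_real s" using eq nx s_def by (simp add: add_eq_0_iff)
  have sn: "complex_of_real s \<noteq> 0" using pos unfolding s_def of_real_eq_0_iff by linarith
  have "q \<noteq> 0" using eq2 sn by auto
  hence "r = of_real (- s / q)" using eq2 by (simp add: field_simps)
  thus ?thesis using pos q s_def \<open>q \<noteq> 0\<close> by (simp add: divide_neg_pos)
qed
lemma prod_mset_real:
  assumes "\<forall>x\<in>#A. Im x = 0"
  shows "(\<Prod>x\<in>#A. (complex_of_real t - x)) = of_real (\<Prod>x\<in>#A. (t - Re x))"
  using assms
proof (induction A)
  case empty then show ?case by simp
next
  case (add a A)
  have "complex_of_real t - a = of_real (t - Re a)" using add.prems by (simp add: complex_eq_iff)
  then show ?case using add by simp
qed

lemma prod_mset_mono: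
  assumes "\<forall>x\<in>#A. Re x < 0" "0 \<le> t1" "t1 \<le> t2"
  shows "0 < (\<Prod>x\<in>#A. (t1 - Re x)) \<and> (\<Prod>x\<in>#A. (t1 - Re x)) \<le> (\<Prod>x\<in>#A. (t2 - Re x))"
  using assms
proof (induction A)
  case empty then show ?case by simp
next
  case (add a A)
  have a: "0 < t1 - Re a" "t1 - Re a \<le> t2 - Re a" using add.prems by auto
  from add have IH: "0 < (\<Prod>x\<in>#A. (t1 - Re x))" "(\<Prod>x\<in>#A. (t1 - Re x)) \<le> (\<Prod>x\<in>#A. (t2 - Re x))" by auto
  show ?case using a IH by (simp add: mult_mono)
qed

lemma detpoly_mono:
  fixes Q :: "complex^'n::finite^'n"
  assumes psd: "\<forall>x. \<exists>q\<ge>0. (\<Sum>i\<in>UNIV. \<Sum>j\<in>UNIV. cnj (x$i) * Q$i$j * x$j) = of_real q"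
    and t: "0 \<le> t1" "t1 \<le> t2"
  shows "1 \<le> Re (poly (detpoly Q) (of_real t1)) \<and>
         Re (poly (detpoly Q) (of_real t1)) \<le> Re (poly (detpoly Q) (of_real t2))"
proof -
  let ?P = "detpoly Q"
  have P0: "poly ?P 0 = 1" by (simp add: poly_detpoly mat_def det_I[unfolded mat_def])
  hence "?P \<noteq> 0" by auto
  then obtain A where A: "?P = smult (lead_coeff ?P) (\<Prod>x\<in>#A. [:-x, 1:])"
    using alg_closed_imp_factorization by blast
  define c where "c = lead_coeff ?P"
  have pz: "poly ?P z = c * (\<Prod>x\<in>#A. (z - x))" for z
    by (subst A) (simp add: c_def poly_prod_mset image_mset.compositionality o_def)
  have roots: "\<forall>x\<in>#A. Im x = 0 \<and> Re x < 0"
  proof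
    fix x assume "x \<in># A"
    hence "poly ?P x = 0" by (simp add: pz prod_mset_zero_iff)
    thus "Im x = 0 \<and> Re x < 0" using detpoly_root[OF psd] by blast
  qed
  define g where "g t = (\<Prod>x\<in>#A. (t - Re x))" for t
  have pg: "poly ?P (of_real t) = c * of_real (g t)" for t
    using pz prod_mset_real[of A t] roots g_def by simp
  have m1: "0 < g 0 \<and> g 0 \<le> g t1" using prod_mset_mono[of A 0 t1] roots t g_def by auto
  have m2: "0 < g t1 \<and> g t1 \<le> g t2" using prod_mset_mono[of A t1 t2] roots t g_def by auto
  have "c * of_real (g 0) = 1" using pg[of 0] P0 by simp
  hence c: "c = of_real (1 / g 0)" using m1 by (simp add: field_simps)
  have "Re (poly ?P (of_real t)) = g t / g 0" for t using pg c by simp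
  thus ?thesis using m1 m2 by (simp add: divide_right_mono)
qed


lemma rect_param_cont: "continuous_on UNIV (rect_param c a b)"
proof -
  have "rect_param c a b = (\<lambda>p. c + fst p *\<^sub>R a + snd p *\<^sub>R b)"
    by (auto simp: rect_param_def split_beta fun_eq_iff)
  thus ?thesis by (simp add: continuous_intros)
qed

lemma rect_param_meas: "rect_param c a b \<in> restrict_space lborel B \<rightarrow>\<^sub>M borel"
  by (intro measurable_restrict_space1) (simp add: measurable_lborel2 borel_measurable_continuous_onI[OF rect_param_cont])

lemma rect_sets: "sets (rect_measure c a b L1 L2) = sets borel"
  by (simp add: rect_measure_def)

lemma rect_space: "space (rect_measure c a b L1 L2) = UNIV"
  by (simp add: rect_measure_def)

lemma rect_finite: "finite_measure (rect_measure c a b L1 L2)"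
proof (rule finite_measureI)
  let ?B = "cbox (0::real, 0::real) (L1, L2)"
  have "emeasure (rect_measure c a b L1 L2) (space (rect_measure c a b L1 L2))
        = emeasure (restrict_space lborel ?B) (rect_param c a b -` UNIV \<inter> space (restrict_space lborel ?B))"
    unfolding rect_measure_def
    by (subst emeasure_distr[OF rect_param_meas]) auto
  also have "\<dots> = emeasure lborel ?B"
    by (simp add: emeasure_restrict_space space_restrict_space)
  also have "\<dots> < \<infinity>" by (rule emeasure_bounded_finite) simp
  finally show "emeasure (rect_measure c a b L1 L2) (space (rect_measure c a b L1 L2)) \<noteq> \<infinity>" by simp
qed

lemma rect_set_closed: "rect_set c a b L1 L2 \<in> sets borel"
proof -
  have "compact (rect_set c a b L1 L2)"
    unfolding rect_set_def
    by (rule compact_continuous_image[OF continuous_on_subset[OF rect_param_cont]]) auto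
  thus ?thesis by (simp add: compact_imp_closed borel_closed)
qed

lemma rect_AE: "AE s in rect_measure c a b L1 L2. s \<in> rect_set c a b L1 L2"
proof -
  let ?B = "cbox (0::real, 0::real) (L1, L2)"
  have "AE x in restrict_space lborel ?B. rect_param c a b x \<in> rect_set c a b L1 L2"
    by (subst AE_restrict_space_iff) (auto simp: rect_set_def)
  thus ?thesis unfolding rect_measure_def
    using rect_set_closed
    by (subst AE_distr_iff[OF rect_param_meas]) auto
qed

lemma le_one_plus_sq: "(x::real) \<le> 1 + x\<^sup>2"
proof -
  have "0 \<le> (x - 1/2)\<^sup>2" by simp
  thus ?thesis by (simp add: power2_eq_square algebra_simps)
qed

lemma beam_e_nth: "beam_e MT h w r $ i = (\<integral>s. h r s * w s $ i \<partial>MT)"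
  by (simp add: beam_e_def)

lemma gram_nth: "gram_Q MR MT h w $ i $ j = (\<integral>r. cnj (beam_e MT h w r $ i) * beam_e MT h w r $ j \<partial>MR)"
  by (simp add: gram_Q_def)

lemma gram_facts:
  fixes h :: "real^3 \<Rightarrow> real^3 \<Rightarrow> complex" and w :: "real^3 \<Rightarrow> complex^'n::finite"
  assumes fT: "finite_measure MT" and fR: "finite_measure MR"
    and h_meas: "(\<lambda>(r, s). h r s) \<in> borel_measurable (MR \<Otimes>\<^sub>M MT)"
    and bnd: "\<forall>r \<in> SR. \<forall>s \<in> ST. norm (h r s) \<le> B"
    and AT: "AE s in MT. s \<in> ST" and AR: "AE r in MR. r \<in> SR"
    and adm: "admissible MT w"
  shows "\<forall>i j. integrable MR (\<lambda>r. cnj (beam_e MT h w r $ i) * beam_e MT h w r $ j)"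
proof -
  define B' where "B' = max B 0"
  have wm: "w \<in> borel_measurable MT" and wi: "integrable MT (\<lambda>s. (norm (w s))\<^sup>2)"
    using adm by (auto simp: admissible_def)
  have sfT: "sigma_finite_measure MT" using fT unfolding finite_measure_def by blast
  have em: "(\<lambda>r. beam_e MT h w r $ i) \<in> borel_measurable MR" for i
  proof -
    have "(\<lambda>p. w (snd p) $ i) \<in> borel_measurable (MR \<Otimes>\<^sub>M MT)"
    proof -
      have "(\<lambda>p. w (snd p)) \<in> borel_measurable (MR \<Otimes>\<^sub>M MT)"
        using measurable_compose[OF measurable_snd wm, of MR] by simp
      moreover have "continuous_on UNIV (\<lambda>x::complex^'n. x $ i)" by (intro continuous_intros)
      ultimately show ?thesis by (rule borel_measurable_continuous_on[rotated])
    qed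
    hence "(\<lambda>(r, s). h r s * w s $ i) \<in> borel_measurable (MR \<Otimes>\<^sub>M MT)"
      using h_meas by (simp add: split_beta')
    thus ?thesis unfolding beam_e_nth
      by (rule sigma_finite_measure.borel_measurable_lebesgue_integral[OF sfT])
  qed
  define K where "K = (\<integral>s. B' * (1 + (norm (w s))\<^sup>2) \<partial>MT)"
  have Kint: "integrable MT (\<lambda>s. B' * (1 + (norm (w s))\<^sup>2))"
    using wi finite_measure.integrable_const[OF fT] by (intro integrable_mult_right Bochner_Integration.integrable_add) auto
  have eb: "norm (beam_e MT h w r $ i) \<le> K" if r: "r \<in> SR" for r i
  proof -
    have "norm (beam_e MT h w r $ i) \<le> (\<integral>s. norm (h r s * w s $ i) \<partial>MT)"
      unfolding beam_e_nth by (rule integral_norm_bound)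
    also have "\<dots> \<le> K" unfolding K_def
    proof (rule integral_mono_AE'[OF Kint])
      show "AE s in MT. norm (h r s * w s $ i) \<le> B' * (1 + (norm (w s))\<^sup>2)"
        using AT
      proof (rule AE_mp, intro AE_I2 impI)
        fix s assume s: "s \<in> ST"
        have "norm (h r s * w s $ i) = norm (h r s) * norm (w s $ i)" by (simp add: norm_mult)
        also have "\<dots> \<le> B' * norm (w s)"
        proof (rule mult_mono)
          show "norm (h r s) \<le> B'" using bnd r s by (force simp: B'_def le_max_iff_disj)
          show "norm (w s $ i) \<le> norm (w s)" by (rule Finite_Cartesian_Product.norm_nth_le)
        qed (auto simp: B'_def)
        also have "\<dots> \<le> B' * (1 + (norm (w s))\<^sup>2)"
          by (intro mult_left_mono le_one_plus_sq) (auto simp: B'_def)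
        finally show "norm (h r s * w s $ i) \<le> B' * (1 + (norm (w s))\<^sup>2)" .
      qed
      show "AE s in MT. 0 \<le> B' * (1 + (norm (w s))\<^sup>2)"
        by (auto simp: B'_def)
    qed
    finally show ?thesis .
  qed
  show ?thesis
  proof (intro allI)
    fix i j
    show "integrable MR (\<lambda>r. cnj (beam_e MT h w r $ i) * beam_e MT h w r $ j)"
    proof (rule finite_measure.integrable_const_bound[OF fR])
      show "AE r in MR. norm (cnj (beam_e MT h w r $ i) * beam_e MT h w r $ j) \<le> K * K"
        using AR
      proof (rule AE_mp, intro AE_I2 impI)
        fix r assume "r \<in> SR"
        thus "norm (cnj (beam_e MT h w r $ i) * beam_e MT h w r $ j) \<le> K * K"
          using eb[of r i] eb[of r j] by (simp add: norm_mult) (rule mult_mono, auto intro: order_trans[OF norm_ge_zero])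
      qed
      show "(\<lambda>r. cnj (beam_e MT h w r $ i) * beam_e MT h w r $ j) \<in> borel_measurable MR"
      proof (rule borel_measurable_times[OF _ em[of j]])
        have "continuous_on UNIV cnj" by (intro continuous_intros)
        thus "(\<lambda>r. cnj (beam_e MT h w r $ i)) \<in> borel_measurable MR"
          using em[of i] by (rule borel_measurable_continuous_on)
      qed
    qed
  qed
qed

lemma quad_pointwise:
  fixes x e :: "complex^'n::finite"
  shows "(\<Sum>i\<in>UNIV. \<Sum>j\<in>UNIV. cnj (x$i) * (cnj (e$i) * e$j) * x$j)
         = of_real ((cmod (\<Sum>j\<in>UNIV. e$j * x$j))\<^sup>2)"
proof -
  have "complex_of_real ((cmod (\<Sum>j\<in>UNIV. e$j * x$j))\<^sup>2)
        = cnj (\<Sum>i\<in>UNIV. e$i * x$i) * (\<Sum>j\<in>UNIV. e$j * x$j)"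
    by (simp only: complex_norm_square mult.commute)
  also have "\<dots> = (\<Sum>i\<in>UNIV. \<Sum>j\<in>UNIV. cnj (e$i * x$i) * (e$j * x$j))"
    by (simp only: cnj_sum sum_product)
  also have "\<dots> = (\<Sum>i\<in>UNIV. \<Sum>j\<in>UNIV. cnj (x$i) * (cnj (e$i) * e$j) * x$j)"
    by (simp add: algebra_simps)
  finally show ?thesis by simp
qed

lemma gram_psd:
  fixes w :: "real^3 \<Rightarrow> complex^'n::finite"
  assumes int: "\<forall>i j. integrable MR (\<lambda>r. cnj (beam_e MT h w r $ i) * beam_e MT h w r $ j)"
  shows "\<forall>x. \<exists>q\<ge>0. (\<Sum>i\<in>UNIV. \<Sum>j\<in>UNIV. cnj (x$i) * gram_Q MR MT h w $i$j * x$j) = of_real q"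
proof
  fix x :: "complex^'n"
  let ?E = "beam_e MT h w"
  have "(\<Sum>i\<in>UNIV. \<Sum>j\<in>UNIV. cnj (x$i) * gram_Q MR MT h w $i$j * x$j)
      = (\<Sum>i\<in>UNIV. \<Sum>j\<in>UNIV. \<integral>r. cnj (x$i) * (cnj (?E r$i) * ?E r$j) * x$j \<partial>MR)"
    by (simp add: gram_nth)
  also have "\<dots> = (\<Sum>i\<in>UNIV. \<integral>r. (\<Sum>j\<in>UNIV. cnj (x$i) * (cnj (?E r$i) * ?E r$j) * x$j) \<partial>MR)"
    by (intro sum.cong refl Bochner_Integration.integral_sum[symmetric] integrable_mult_left integrable_mult_right) (use int in auto)
  also have "\<dots> = (\<integral>r. (\<Sum>i\<in>UNIV. \<Sum>j\<in>UNIV. cnj (x$i) * (cnj (?E r$i) * ?E r$j) * x$j) \<partial>MR)"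
    by (rule Bochner_Integration.integral_sum[where I=UNIV and f="\<lambda>i r. \<Sum>j\<in>UNIV. cnj (x$i) * (cnj (?E r$i) * ?E r$j) * x$j", symmetric])
       (intro Bochner_Integration.integrable_sum integrable_mult_left integrable_mult_right, use int in auto)
  also have "\<dots> = (\<integral>r. complex_of_real ((cmod (\<Sum>j\<in>UNIV. ?E r$j * x$j))\<^sup>2) \<partial>MR)"
    by (simp only: quad_pointwise)
  also have "\<dots> = complex_of_real (\<integral>r. (cmod (\<Sum>j\<in>UNIV. ?E r$j * x$j))\<^sup>2 \<partial>MR)"
    by (rule integral_complex_of_real)
  finally show "\<exists>q\<ge>0. (\<Sum>i\<in>UNIV. \<Sum>j\<in>UNIV. cnj (x$i) * gram_Q MR MT h w $i$j * x$j) = of_real q"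
    by (intro exI[of _ "\<integral>r. (cmod (\<Sum>j\<in>UNIV. ?E r$j * x$j))\<^sup>2 \<partial>MR"]) (auto intro: integral_nonneg)
qed

definition psdq :: "complex^'n::finite^'n \<Rightarrow> bool" where
  "psdq Q \<longleftrightarrow> (\<forall>x. \<exists>q\<ge>0. (\<Sum>i\<in>UNIV. \<Sum>j\<in>UNIV. cnj (x$i) * Q$i$j * x$j) = of_real q)"

lemma det_detpoly: fixes Q :: "complex^'n::finite^'n" shows "det (mat 1 + t *\<^sub>R Q) = poly (detpoly Q) (complex_of_real t)"
proof -
  have "mat 1 + t *\<^sub>R Q = (\<chi> i j. (mat 1 :: complex^'n^'n)$i$j + complex_of_real t * Q$i$j)"
    unfolding vec_eq_iff vector_add_component vector_scaleR_component vec_lambda_beta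
    by (simp add: scaleR_conv_of_real)
  thus ?thesis by (simp add: poly_detpoly)
qed

lemma rate_mono:
  assumes "psdq Q" "0 < s'" "s' \<le> s"
  shows "logdet_rate s Q \<le> logdet_rate s' Q"
proof -
  have "0 \<le> 1/s" "1/s \<le> 1/s'" using assms by (auto simp: frac_le)
  from detpoly_mono[OF assms(1)[unfolded psdq_def] this]
  show ?thesis unfolding logdet_rate_def det_detpoly by simp
qed

lemma rate_nonneg:
  assumes "psdq Q" "0 < s"
  shows "0 \<le> logdet_rate s Q"
proof -
  have "0 \<le> 1/s" using assms by auto
  from detpoly_mono[OF assms(1)[unfolded psdq_def] this order_refl]
  show ?thesis unfolding logdet_rate_def det_detpoly by simp
qed

lemma rate_zero: "logdet_rate s (0 :: complex^'n::finite^'n) = 0"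
  by (simp add: logdet_rate_def)

lemma beam_scale: "beam_e MT h (\<lambda>s. a *\<^sub>R w s) r = a *\<^sub>R beam_e MT h w r"
proof -
  have "(\<integral>s. h r s * (a *\<^sub>R (w s $ i)) \<partial>MT) = a *\<^sub>R (\<integral>s. h r s * w s $ i \<partial>MT)" for i
  proof -
    have "(\<integral>s. h r s * (a *\<^sub>R (w s $ i)) \<partial>MT) = (\<integral>s. complex_of_real a * (h r s * w s $ i) \<partial>MT)"
      by (simp add: scaleR_conv_of_real mult.left_commute)
    also have "\<dots> = complex_of_real a * (\<integral>s. h r s * w s $ i \<partial>MT)"
      by (rule integral_mult_right_zero)
    finally show ?thesis by (simp add: scaleR_conv_of_real)
  qed
  thus ?thesis unfolding beam_e_def vec_eq_iff vector_scaleR_component vec_lambda_beta by simp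
qed

lemma gram_scale: "gram_Q MR MT h (\<lambda>s. a *\<^sub>R w s) = (a\<^sup>2) *\<^sub>R gram_Q MR MT h w"
proof -
  have "(\<integral>r. cnj (a *\<^sub>R (beam_e MT h w r $ i)) * (a *\<^sub>R (beam_e MT h w r $ j)) \<partial>MR)
      = (a\<^sup>2) *\<^sub>R (\<integral>r. cnj (beam_e MT h w r $ i) * beam_e MT h w r $ j \<partial>MR)" for i j
  proof -
    have "(\<integral>r. cnj (a *\<^sub>R (beam_e MT h w r $ i)) * (a *\<^sub>R (beam_e MT h w r $ j)) \<partial>MR)
       = (\<integral>r. complex_of_real (a\<^sup>2) * (cnj (beam_e MT h w r $ i) * beam_e MT h w r $ j) \<partial>MR)"
      by (intro Bochner_Integration.integral_cong refl) (simp add: scaleR_conv_of_real power2_eq_square algebra_simps)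
    also have "\<dots> = complex_of_real (a\<^sup>2) * (\<integral>r. cnj (beam_e MT h w r $ i) * beam_e MT h w r $ j \<partial>MR)"
      by (rule integral_mult_right_zero)
    finally show ?thesis by (simp add: scaleR_conv_of_real)
  qed
  thus ?thesis unfolding gram_Q_def beam_scale vec_eq_iff vector_scaleR_component vec_lambda_beta by simp
qed

lemma energy_scale: "energy MT (\<lambda>s. a *\<^sub>R w s) = a\<^sup>2 * energy MT w"
  unfolding energy_def by (simp add: power_mult_distrib)

lemma admissible_scale:
  assumes "admissible MT w" shows "admissible MT (\<lambda>s. a *\<^sub>R w s)"
  using assms unfolding admissible_def by (auto simp: power_mult_distrib)

lemma gram_zero:
  assumes adm: "admissible MT w" and e0: "energy MT w = 0"
  shows "gram_Q MR MT h w = 0"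
proof -
  have wi: "integrable MT (\<lambda>s. (norm (w s))\<^sup>2)" using adm by (simp add: admissible_def)
  have "AE s in MT. (norm (w s))\<^sup>2 = 0"
    using e0 integral_nonneg_eq_0_iff_AE[OF wi] by (simp add: energy_def)
  hence AEz: "AE s in MT. w s = 0" by simp
  have "beam_e MT h w r = 0" for r
  proof -
    have "(\<integral>s. h r s * w s $ i \<partial>MT) = 0" for i
      by (rule integral_eq_zero_AE) (use AEz in auto)
    thus ?thesis by (simp add: beam_e_def vec_eq_iff)
  qed
  thus ?thesis by (simp add: gram_Q_def vec_eq_iff)
qed


theorem lemma1:
  fixes cT aT bT cR aR bR :: "real^3"
    and LT1 LT2 LR1 LR2 PT \<sigma>2 :: real
    and h :: "real^3 \<Rightarrow> real^3 \<Rightarrow> complex"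
    and wd :: "real^3 \<Rightarrow> complex^'n::finite"
  defines "MT \<equiv> rect_measure cT aT bT LT1 LT2"
    and "MR \<equiv> rect_measure cR aR bR LR1 LR2"
  assumes rectT: "valid_rect aT bT LT1 LT2"
    and rectR: "valid_rect aR bR LR1 LR2"
    and PT: "PT > 0" and sig: "\<sigma>2 > 0"
    and h_meas: "(\<lambda>(r, s). h r s) \<in> borel_measurable (MR \<Otimes>\<^sub>M MT)"
    and h_bdd: "\<exists>B. \<forall>r \<in> rect_set cR aR bR LR1 LR2. \<forall>s \<in> rect_set cT aT bT LT1 LT2.
                    norm (h r s) \<le> B"
    and wd_adm: "admissible MT wd" and wd_nz: "energy MT wd > 0"
    and wd_opt: "\<forall>w :: real^3 \<Rightarrow> complex^'n. admissible MT w \<and> energy MT w > 0 \<longrightarrow>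
        logdet_rate (\<sigma>2 / PT * energy MT w) (gram_Q MR MT h w)
          \<le> logdet_rate (\<sigma>2 / PT * energy MT wd) (gram_Q MR MT h wd)"
  shows "let ws = (\<lambda>s. sqrt (PT / energy MT wd) *\<^sub>R wd s) in
           admissible MT ws \<and> energy MT ws \<le> PT \<and>
           (\<forall>w :: real^3 \<Rightarrow> complex^'n. admissible MT w \<and> energy MT w \<le> PT \<longrightarrow>
              logdet_rate \<sigma>2 (gram_Q MR MT h w) \<le> logdet_rate \<sigma>2 (gram_Q MR MT h ws))"
  
proof -
  have fT: "finite_measure MT" unfolding MT_def by (rule rect_finite)
  have fR: "finite_measure MR" unfolding MR_def by (rule rect_finite)
  have AT: "AE s in MT. s \<in> rect_set cT aT bT LT1 LT2" unfolding MT_def by (rule rect_AE)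
  have AR: "AE r in MR. r \<in> rect_set cR aR bR LR1 LR2" unfolding MR_def by (rule rect_AE)
  obtain B where B: "\<forall>r \<in> rect_set cR aR bR LR1 LR2. \<forall>s \<in> rect_set cT aT bT LT1 LT2. norm (h r s) \<le> B"
    using h_bdd by blast
  have psd: "psdq (gram_Q MR MT h w)" if "admissible MT w" for w :: "real^3 \<Rightarrow> complex^'n"
    unfolding psdq_def
    by (rule gram_psd[OF gram_facts[OF fT fR h_meas B AT AR that]])
  define E where "E = energy MT wd"
  have E0: "E > 0" using wd_nz E_def by simp
  define a where "a = sqrt (PT / E)"
  have a2: "a\<^sup>2 = PT / E" using PT E0 by (simp add: a_def)
  define ws where "ws = (\<lambda>s. a *\<^sub>R wd s)"
  have ws_adm: "admissible MT ws" unfolding ws_def by (rule admissible_scale[OF wd_adm])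
  have ws_en: "energy MT ws = PT" unfolding ws_def energy_scale a2 E_def[symmetric] using E0 by simp
  have key: "logdet_rate \<sigma>2 (gram_Q MR MT h ws) = logdet_rate (\<sigma>2 / PT * E) (gram_Q MR MT h wd)"
  proof -
    have "1 / \<sigma>2 * a\<^sup>2 = 1 / (\<sigma>2 / PT * E)"
      using a2 PT E0 sig by (simp add: field_simps)
    thus ?thesis unfolding logdet_rate_def ws_def gram_scale scaleR_scaleR by simp
  qed
  have opt: "logdet_rate \<sigma>2 (gram_Q MR MT h w) \<le> logdet_rate \<sigma>2 (gram_Q MR MT h ws)"
    if w: "admissible MT w" "energy MT w \<le> PT" for w :: "real^3 \<Rightarrow> complex^'n"
  proof (cases "energy MT w = 0")
    case True
    have "logdet_rate \<sigma>2 (gram_Q MR MT h w) = 0" using gram_zero[OF w(1) True] rate_zero by simp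
    also have "0 \<le> logdet_rate \<sigma>2 (gram_Q MR MT h ws)" by (rule rate_nonneg[OF psd[OF ws_adm] sig])
    finally show ?thesis .
  next
    case False
    have "energy MT w \<ge> 0" unfolding energy_def by (rule Bochner_Integration.integral_nonneg) simp
    hence Ew: "energy MT w > 0" using False by simp
    have "logdet_rate \<sigma>2 (gram_Q MR MT h w) \<le> logdet_rate (\<sigma>2 / PT * energy MT w) (gram_Q MR MT h w)"
    proof (rule rate_mono[OF psd[OF w(1)]])
      show "0 < \<sigma>2 / PT * energy MT w" using sig PT Ew by simp
      have "\<sigma>2 / PT * energy MT w \<le> \<sigma>2 / PT * PT"
        using w(2) sig PT by (intro mult_left_mono) auto
      thus "\<sigma>2 / PT * energy MT w \<le> \<sigma>2" using PT by simp
    qed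
    also have "\<dots> \<le> logdet_rate (\<sigma>2 / PT * E) (gram_Q MR MT h wd)"
      using wd_opt w(1) Ew E_def by blast
    also have "\<dots> = logdet_rate \<sigma>2 (gram_Q MR MT h ws)" using key by simp
    finally show ?thesis .
  qed
  show ?thesis
    unfolding Let_def a_def[symmetric] E_def[symmetric] ws_def[symmetric]
    using ws_adm ws_en opt by auto
qed

end
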